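(* The triple $(\mathbb{G}, \varepsilon, (\cdot)^* )$ is a comonad in Kleisli form on the category of $\sigma$-structures, i.e. the following equations hold (for all $\sigma$-structures $\mathcal{A}$ and homomorphisms $f : \mathbb{G}\mathcal{A} \to \mathcal{B}$, $g : \mathbb{G}\mathcal{B} \to \mathcal{C}$): \[ \varepsilon_{\mathcal{A}}^* = \mathsf{id}_{\mathbb{G} \mathcal{A}}, \qquad \varepsilon \circ f^* = f, \qquad (g \circ f^* )^* = g^* \circ f^* . \]
   Context: Fix a relational vocabulary $\sigma$ and a notion of guarding $\mathfrak{g}$ (atom, loose, or clique guards). A subset $X$ of a $\sigma$-structure $\mathcal{A}$ is $\mathfrak{g}$-guarded if it is contained in the support of a tuple $\vec{a}$ with $\mathcal{A} \models G(\vec{a})$ for some $\mathfrak{g}$-guard $G$. A play is a non-empty list $p = [U_1,\ldots,U_n]$ of $\mathfrak{g}$-guarded sets of $\mathcal{A}$, with last element $\lambda(p) = U_n$; plays are ordered by the prefix order $\sqsubseteq$. A focussed play is a pair $\langle p, a\rangle$ with $a \in \lambda(p)$. Define $\langle p, a\rangle \sim \langle q, a'\rangle$ iff $a = a'$, the greatest common prefix $p \sqcap q$ is non-empty, and $a$ belongs to $\lambda(u)$ for every $u \in [p\sqcap q, p] \cup [p \sqcap q, q]$. Write $[p,a]$ for the $\sim$-equivalence class of $\langle p, a\rangle$. The structure $\mathbb{G}\mathcal{A}$ (written $\mathbb{G}^{\mathfrak{g}}\mathcal{A}$ when the guard type matters) has universe the set of these classes, and $R^{\mathbb{G}\mathcal{A}}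 = \{([p,a_1],\ldots,[p,a_r]) \mid R^{\mathcal{A}}(a_1,\ldots,a_r)\}$. The counit $\varepsilon_{\mathcal{A}} : \mathbb{G}\mathcal{A} \to \mathcal{A}$ is $\varepsilon_{\mathcal{A}}([p,a]) = a$. For a homomorphism $h : \mathbb{G}\mathcal{A} \to \mathcal{B}$, its coextension $h^* : \mathbb{G}\mathcal{A} \to \mathbb{G}\mathcal{B}$ is $h^*([[U_1,\ldots,U_n],a]) = [[V_1,\ldots,V_n], h([[U_1,\ldots,U_n],a])]$, where $V_j = \{ h([[U_1,\ldots,U_j], b]) \mid b \in U_j\}$ for $1 \le j \le n$. *)

theory Defs
  imports Main "HOL-Library.Sublist"
begin

text \<open>A vocabulary sigma is given by a type of relation symbols 'r together with an
  arity function ar. A structure has a universe and an interpretation of each symbol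
  as a set of tuples (lists).\<close>

record ('a, 'r) struct =
  univ :: "'a set"
  rel  :: "'r \<Rightarrow> 'a list set"

definition sigma_struct :: "('r \<Rightarrow> nat) \<Rightarrow> ('a, 'r) struct \<Rightarrow> bool" where
  "sigma_struct ar A \<longleftrightarrow>
     (\<forall>R. \<forall>t\<in>rel A R. length t = ar R \<and> set t \<subseteq> univ A)"

definition hom :: "('a, 'r) struct \<Rightarrow> ('b, 'r) struct \<Rightarrow> ('a \<Rightarrow> 'b) \<Rightarrow> bool" where
  "hom A B h \<longleftrightarrow>
     (\<forall>x\<in>univ A. h x \<in> univ B) \<and> (\<forall>R. \<forall>t\<in>rel A R. map h t \<in> rel B R)"

datatype 'r gatom = RelA 'r "nat list" | EqA nat nat

fun avars :: "'r gatom \<Rightarrow> nat set" where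
  "avars (RelA R xs) = set xs"
| "avars (EqA i j) = {i, j}"

fun aholds :: "('a, 'r) struct \<Rightarrow> (nat \<Rightarrow> 'a) \<Rightarrow> 'r gatom \<Rightarrow> bool" where
  "aholds A v (RelA R xs) \<longleftrightarrow> map v xs \<in> rel A R"
| "aholds A v (EqA i j) \<longleftrightarrow> v i = v j"

text \<open>A guard formula: exists (variables not among 0..<gfree) . conjunction of atoms.
  The free variables are 0, ..., gfree - 1 (the tuple x-bar of G(x-bar)).\<close>

record 'r guard =
  gatoms :: "'r gatom list"
  gfree  :: nat

definition gvars :: "'r guard \<Rightarrow> nat set" where
  "gvars G = (\<Union>\<alpha>\<in>set (gatoms G). avars \<alpha>)"

definition well_typed_guard :: "('r \<Rightarrow> nat) \<Rightarrow> 'r guard \<Rightarrow> bool" where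
  "well_typed_guard ar G \<longleftrightarrow>
     gatoms G \<noteq> [] \<and>
     (\<forall>R xs. RelA R xs \<in> set (gatoms G) \<longrightarrow> length xs = ar R) \<and>
     {0..<gfree G} \<subseteq> gvars G"

definition cooccur :: "'r guard \<Rightarrow> bool" where
  "cooccur G \<longleftrightarrow>
     (\<forall>i<gfree G. \<forall>j<gfree G. \<exists>\<alpha>\<in>set (gatoms G). {i, j} \<subseteq> avars \<alpha>)"

datatype guard_kind = AtomG | LooseG | CliqueG

fun is_guard :: "('r \<Rightarrow> nat) \<Rightarrow> guard_kind \<Rightarrow> 'r guard \<Rightarrow> bool" where
  "is_guard ar AtomG G \<longleftrightarrow>
     well_typed_guard ar G \<and> length (gatoms G) = 1 \<and> gvars G = {0..<gfree G}"
| "is_guard ar LooseG G \<longleftrightarrow>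
     well_typed_guard ar G \<and> gvars G = {0..<gfree G} \<and> cooccur G"
| "is_guard ar CliqueG G \<longleftrightarrow>
     well_typed_guard ar G \<and> cooccur G"

definition sat_guard :: "('a, 'r) struct \<Rightarrow> 'r guard \<Rightarrow> 'a list \<Rightarrow> bool" where
  "sat_guard A G as \<longleftrightarrow>
     length as = gfree G \<and>
     (\<exists>v. (\<forall>i<gfree G. v i = as ! i) \<and> (\<forall>i\<in>gvars G. v i \<in> univ A) \<and>
          (\<forall>\<alpha>\<in>set (gatoms G). aholds A v \<alpha>))"

definition guarded :: "('r \<Rightarrow> nat) \<Rightarrow> guard_kind \<Rightarrow> ('a, 'r) struct \<Rightarrow> 'a set \<Rightarrow> bool" where
  "guarded ar k A X \<longleftrightarrow>
     (\<exists>G as. is_guard ar k G \<and> sat_guard A G as \<and> X \<subseteq> set as)"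

definition plays :: "('r \<Rightarrow> nat) \<Rightarrow> guard_kind \<Rightarrow> ('a, 'r) struct \<Rightarrow> 'a set list set" where
  "plays ar k A = {p. p \<noteq> [] \<and> (\<forall>U\<in>set p. guarded ar k A U)}"

definition fplays :: "('r \<Rightarrow> nat) \<Rightarrow> guard_kind \<Rightarrow> ('a, 'r) struct \<Rightarrow> ('a set list \<times> 'a) set" where
  "fplays ar k A = {(p, a). p \<in> plays ar k A \<and> a \<in> last p}"

definition sim :: "('r \<Rightarrow> nat) \<Rightarrow> guard_kind \<Rightarrow> ('a, 'r) struct
                   \<Rightarrow> (('a set list \<times> 'a) \<times> ('a set list \<times> 'a)) set" where
  "sim ar k A = {((p, a), (q, b)).
      (p, a) \<in> fplays ar k A \<and> (q, b) \<in> fplays ar k A \<and> a = b \<and>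
      longest_common_prefix p q \<noteq> [] \<and>
      (\<forall>u. prefix (longest_common_prefix p q) u \<and> (prefix u p \<or> prefix u q)
            \<longrightarrow> a \<in> last u)}"

definition cls :: "('r \<Rightarrow> nat) \<Rightarrow> guard_kind \<Rightarrow> ('a, 'r) struct
                   \<Rightarrow> 'a set list \<times> 'a \<Rightarrow> ('a set list \<times> 'a) set" where
  "cls ar k A pa = sim ar k A `` {pa}"

definition Gstruct :: "('r \<Rightarrow> nat) \<Rightarrow> guard_kind \<Rightarrow> ('a, 'r) struct
                       \<Rightarrow> (('a set list \<times> 'a) set, 'r) struct" where
  "Gstruct ar k A =
     \<lparr> univ = fplays ar k A // sim ar k A,
       rel = (\<lambda>R. {map (\<lambda>a. cls ar k A (p, a)) as | p as.
                      p \<in> plays ar k A \<and> as \<in> rel A R \<and> set as \<subseteq> last p}) \<rparr>"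

definition counit :: "('a set list \<times> 'a) set \<Rightarrow> 'a" where
  "counit x = snd (SOME y. y \<in> x)"

definition coext :: "('r \<Rightarrow> nat) \<Rightarrow> guard_kind \<Rightarrow> ('a, 'r) struct \<Rightarrow> ('b, 'r) struct
                     \<Rightarrow> (('a set list \<times> 'a) set \<Rightarrow> 'b)
                     \<Rightarrow> ('a set list \<times> 'a) set \<Rightarrow> ('b set list \<times> 'b) set" where
  "coext ar k A B h x =
     (let (p, a) = (SOME y. y \<in> x)
      in cls ar k B
           (map (\<lambda>j. (\<lambda>b. h (cls ar k A (take (Suc j) p, b))) ` (p ! j)) [0..<length p],
            h (cls ar k A (p, a))))"

end

theory Submission
  imports Defs "HOL-Library.Nat_Bijection"
begin

lemma lcp_comm: "longest_common_prefix xs ys = longest_common_prefix ys xs"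
  by (induction xs ys rule: longest_common_prefix.induct) auto

lemma lcp_prefix_eq: "prefix xs ys \<Longrightarrow> longest_common_prefix xs ys = xs"
  by (meson longest_common_prefix_max_prefix longest_common_prefix_prefix1 prefix_order.antisym prefix_order.refl)

lemma sim_fplays: "((x, y) \<in> sim ar k A) \<Longrightarrow> x \<in> fplays ar k A \<and> y \<in> fplays ar k A"
  unfolding sim_def by auto

lemma sim_refl: "(p, a) \<in> fplays ar k A \<Longrightarrow> ((p, a), (p, a)) \<in> sim ar k A"
  unfolding sim_def fplays_def plays_def
  by (auto simp: lcp_prefix_eq dest: prefix_order.antisym)

lemma sim_sym: "((p, a), (q, b)) \<in> sim ar k A \<Longrightarrow> ((q, b), (p, a)) \<in> sim ar k A"
  unfolding sim_def by (auto simp: lcp_comm)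

lemma sim_trans_aux:
  assumes s1: "((p, a), (q, a)) \<in> sim ar k A" and s2: "((q, a), (r, a)) \<in> sim ar k A"
    and c: "prefix (longest_common_prefix p q) (longest_common_prefix q r)"
  shows "((p, a), (r, a)) \<in> sim ar k A"
proof -
  let ?m1 = "longest_common_prefix p q" and ?m2 = "longest_common_prefix q r"
    and ?m3 = "longest_common_prefix p r"
  have S1: "\<And>u. prefix ?m1 u \<Longrightarrow> prefix u p \<or> prefix u q \<Longrightarrow> a \<in> last u"
    and S2: "\<And>u. prefix ?m2 u \<Longrightarrow> prefix u q \<or> prefix u r \<Longrightarrow> a \<in> last u"
    and ne: "?m1 \<noteq> []" and f: "(p,a) \<in> fplays ar k A" "(r,a) \<in> fplays ar k A"
    using s1 s2 unfolding sim_def by auto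
  have m1p: "prefix ?m1 p" by (rule longest_common_prefix_prefix1)
  have m2r: "prefix ?m2 r" by (rule longest_common_prefix_prefix2)
  have m2q: "prefix ?m2 q" by (rule longest_common_prefix_prefix1)
  have m13: "prefix ?m1 ?m3"
    using c m1p m2r by (meson longest_common_prefix_max_prefix prefix_order.trans)
  have ne3: "?m3 \<noteq> []" using m13 ne by auto
  have "a \<in> last u" if "prefix ?m3 u" "prefix u p \<or> prefix u r" for u
  proof (cases "prefix u p")
    case True
    then show ?thesis using S1 m13 that(1) prefix_order.trans by blast
  next
    case False
    then have ur: "prefix u r" using that by auto
    show ?thesis
    proof (cases "prefix ?m2 u")
      case True then show ?thesis using S2 ur by blast
    next
      case False
      then have "prefix u ?m2" using ur m2r prefix_same_cases by blast
      then have "prefix u q" using m2q prefix_order.trans by blast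
      then show ?thesis using S1 m13 that(1) prefix_order.trans by blast
    qed
  qed
  then show ?thesis using f ne3 unfolding sim_def by auto
qed

lemma sim_trans:
  assumes s1: "((p, a), (q, b)) \<in> sim ar k A" and s2: "((q, b), (r, c)) \<in> sim ar k A"
  shows "((p, a), (r, c)) \<in> sim ar k A"
proof -
  have ab: "a = b" "b = c" using s1 s2 unfolding sim_def by auto
  have "prefix (longest_common_prefix p q) (longest_common_prefix q r) \<or>
        prefix (longest_common_prefix q r) (longest_common_prefix p q)"
    by (meson longest_common_prefix_prefix1 longest_common_prefix_prefix2 prefix_same_cases)
  then show ?thesis
  proof
    assume "prefix (longest_common_prefix p q) (longest_common_prefix q r)"
    then show ?thesis using sim_trans_aux s1 s2 ab by metis
  next
    assume "prefix (longest_common_prefix q r) (longest_common_prefix p q)"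
    then have "prefix (longest_common_prefix r q) (longest_common_prefix q p)" by (simp add: lcp_comm)
    then have "((r, a), (p, a)) \<in> sim ar k A"
      using sim_trans_aux[of r a q ar k A p] sim_sym s1 s2 ab by metis
    then show ?thesis using sim_sym ab by metis
  qed
qed

lemma equiv_sim: "equiv (fplays ar k A) (sim ar k A)"
proof (rule equivI)
  show "sim ar k A \<subseteq> fplays ar k A \<times> fplays ar k A" using sim_fplays by fast
  show "refl_on (fplays ar k A) (sim ar k A)"
    unfolding refl_on_def using sim_refl by fast
  show "sym (sim ar k A)" unfolding sym_def using sim_sym by fast
  show "trans (sim ar k A)" unfolding trans_def using sim_trans by fast
qed

lemma cls_eq: "(x, y) \<in> sim ar k A \<Longrightarrow> cls ar k A x = cls ar k A y"
  unfolding cls_def using equiv_class_eq[OF equiv_sim] by metis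

lemma cls_self: "x \<in> fplays ar k A \<Longrightarrow> x \<in> cls ar k A x"
  unfolding cls_def using sim_refl by (metis Image_singleton_iff surj_pair)

lemma cls_univ: "x \<in> fplays ar k A \<Longrightarrow> cls ar k A x \<in> univ (Gstruct ar k A)"
  unfolding cls_def Gstruct_def by (simp add: quotientI)

lemma univ_cls: "X \<in> univ (Gstruct ar k A) \<Longrightarrow> \<exists>p a. (p, a) \<in> fplays ar k A \<and> X = cls ar k A (p, a)"
  unfolding cls_def Gstruct_def by (auto elim!: quotientE)

lemma some_cls:
  assumes "(p, a) \<in> fplays ar k A"
  shows "((SOME y. y \<in> cls ar k A (p, a)), (p, a)) \<in> sim ar k A"
proof -
  have "(p, a) \<in> cls ar k A (p, a)" by (rule cls_self[OF assms])
  then have "(SOME y. y \<in> cls ar k A (p, a)) \<in> cls ar k A (p, a)" by (rule someI)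
  then show ?thesis unfolding cls_def using sim_sym by (metis Image_singleton_iff surj_pair)
qed

lemma counit_cls: "(p, a) \<in> fplays ar k A \<Longrightarrow> counit (cls ar k A (p, a)) = a"
proof -
  assume a: "(p, a) \<in> fplays ar k A"
  obtain q b where qb: "(SOME y. y \<in> cls ar k A (p, a)) = (q, b)" by fastforce
  have "((q, b), (p, a)) \<in> sim ar k A" using some_cls[OF a] qb by simp
  then have "b = a" unfolding sim_def by simp
  then show ?thesis unfolding counit_def qb by simp
qed

lemma ext_sim:
  assumes "p \<in> plays ar k A" "guarded ar k A W" "c \<in> last p" "c \<in> W"
  shows "((p @ [W], c), (p, c)) \<in> sim ar k A"
proof -
  have lc: "longest_common_prefix (p @ [W]) p = p" by (simp add: lcp_comm lcp_prefix_eq)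
  have "p @ [W] \<in> plays ar k A" using assms unfolding plays_def by auto
  moreover have "u = p \<or> u = p @ [W]" if "prefix p u" "prefix u (p @ [W]) \<or> prefix u p" for u
    using that by (auto dest: prefix_order.antisym)
  ultimately show ?thesis using assms lc unfolding sim_def fplays_def
    by (auto simp: plays_def) (metis prefix_order.antisym)
qed


fun amap :: "(nat \<Rightarrow> nat) \<Rightarrow> 'r gatom \<Rightarrow> 'r gatom" where
  "amap f (RelA R xs) = RelA R (map f xs)"
| "amap f (EqA i j) = EqA (f i) (f j)"

lemma avars_amap: "avars (amap f \<alpha>) = f ` avars \<alpha>"
  by (cases \<alpha>) auto

lemma aholds_amap: "aholds B w (amap f \<alpha>) = aholds B (w \<circ> f) \<alpha>"
  by (cases \<alpha>) auto

lemma aholds_cong: "(\<And>i. i \<in> avars \<alpha> \<Longrightarrow> w i = w' i) \<Longrightarrow> aholds B w \<alpha> = aholds B w' \<alpha>"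
  by (cases \<alpha>) (auto cong: map_cong)

lemma is_guard_wt: "is_guard ar k G \<Longrightarrow> well_typed_guard ar G"
  by (cases k) auto

lemma atom_guarded:
  fixes G :: "'r guard"
  assumes G: "is_guard ar k G" and al: "\<alpha> \<in> set (gatoms G)"
    and u: "\<forall>i\<in>avars \<alpha>. v i \<in> univ A" and h: "aholds A v \<alpha>"
  shows "guarded ar k A (v ` avars \<alpha>)"
proof (cases \<alpha>)
  case (RelA R xs)
  define G' where "G' = \<lparr>gatoms = [RelA R [0..<length xs]], gfree = length xs\<rparr>"
  have len: "length xs = ar R"
    using is_guard_wt[OF G] al RelA unfolding well_typed_guard_def by auto
  have g: "is_guard ar k G'"
    by (cases k) (auto simp: G'_def well_typed_guard_def gvars_def cooccur_def len)
  have "sat_guard A G' (map v xs)"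
    unfolding sat_guard_def
  proof (intro conjI exI[of _ "\<lambda>i. map v xs ! i"])
    show "length (map v xs) = gfree G'" by (simp add: G'_def)
    show "\<forall>i<gfree G'. map v xs ! i = map v xs ! i" by simp
    show "\<forall>i\<in>gvars G'. map v xs ! i \<in> univ A"
      using u RelA by (auto simp: G'_def gvars_def)
    show "\<forall>\<alpha>\<in>set (gatoms G'). aholds A (\<lambda>i. map v xs ! i) \<alpha>"
    proof -
      have "map ((!) (map v xs)) [0..<length xs] = map v xs" by (metis length_map map_nth)
      then show ?thesis using h RelA by (simp add: G'_def)
    qed
  qed
  moreover have "v ` avars \<alpha> \<subseteq> set (map v xs)" using RelA by simp
  ultimately show ?thesis using g unfolding guarded_def by blast
next
  case (EqA i j)
  define G' where "G' = (\<lparr>gatoms = [EqA 0 1], gfree = 2\<rparr> :: 'r guard)"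
  have g: "is_guard ar k G'"
    by (cases k) (auto simp: G'_def well_typed_guard_def gvars_def cooccur_def)
  have "sat_guard A G' [v i, v j]"
    unfolding sat_guard_def
  proof (intro conjI exI[of _ "\<lambda>n. if n = 0 then v i else v j"])
    show "length [v i, v j] = gfree G'" by (simp add: G'_def)
    show "\<forall>n<gfree G'. (if n = 0 then v i else v j) = [v i, v j] ! n"
      by (auto simp: G'_def less_Suc_eq numeral_2_eq_2)
    show "\<forall>n\<in>gvars G'. (if n = 0 then v i else v j) \<in> univ A"
      using u EqA by (auto simp: G'_def gvars_def)
    show "\<forall>\<alpha>\<in>set (gatoms G'). aholds A (\<lambda>n. if n = 0 then v i else v j) \<alpha>"
      using h EqA by (simp add: G'_def)
  qed
  moreover have "v ` avars \<alpha> \<subseteq> set [v i, v j]" using EqA by simp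
  ultimately show ?thesis using g unfolding guarded_def by blast
qed

lemma guarded_img:
  assumes hom: "hom (Gstruct ar k A) B h" and P: "P \<in> plays ar k A"
  shows "guarded ar k B ((\<lambda>b. h (cls ar k A (P, b))) ` last P)"
proof -
  have "last P \<in> set P" using P unfolding plays_def by auto
  then have "guarded ar k A (last P)" using P unfolding plays_def by auto
  then obtain G as where G: "is_guard ar k G" "sat_guard A G as" "last P \<subseteq> set as"
    unfolding guarded_def by blast
  then obtain v where v: "length as = gfree G" "\<forall>i<gfree G. v i = as ! i"
      "\<forall>i\<in>gvars G. v i \<in> univ A" "\<forall>\<alpha>\<in>set (gatoms G). aholds A v \<alpha>"
    unfolding sat_guard_def by blast
  define n where "n = gfree G"
  define ats where "ats = gatoms G"
  define Q where "Q = P @ [set as]"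
  define Qt where "Qt t = Q @ [v ` avars (ats ! t)]" for t
  define ren where "ren t y = (if y < n then y else n + prod_encode (t, y))" for t y
  define w where "w z = (if z < n then h (cls ar k A (Q, as ! z))
     else h (cls ar k A (Qt (fst (prod_decode (z - n))), v (snd (prod_decode (z - n))))))" for z
  define G2 where "G2 = (\<lparr>gatoms = map (\<lambda>t. amap (ren t) (ats ! t)) [0..<length ats], gfree = n\<rparr>)"
  define as2 where "as2 = map w [0..<n]"
  have wt: "well_typed_guard ar G" using is_guard_wt[OF G(1)] .
  have gas: "guarded ar k A (set as)" using G unfolding guarded_def by blast
  have Qplay: "Q \<in> plays ar k A" using P gas unfolding Q_def plays_def by auto
  have atvars: "\<forall>i\<in>avars (ats!t). v i \<in> univ A" if "t < length ats" for t
    using v(3) that unfolding ats_def gvars_def by auto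
  have atin: "ats ! t \<in> set (gatoms G)" if "t < length ats" for t
    using that unfolding ats_def by simp
  have Qtplay: "Qt t \<in> plays ar k A" if "t < length ats" for t
    using Qplay atom_guarded[OF G(1) atin[OF that] atvars[OF that]] v(4) atin[OF that]
    unfolding Qt_def plays_def by auto
  have key: "w (ren t y) = h (cls ar k A (Qt t, v y))" if t: "t < length ats" and y: "y \<in> avars (ats!t)" for t y
  proof (cases "y < n")
    case True
    have "v y = as ! y" using v(2) True n_def by auto
    have "((Qt t, v y), (Q, v y)) \<in> sim ar k A"
      unfolding Qt_def
      apply (rule ext_sim[OF Qplay])
      using atom_guarded[OF G(1) atin[OF t] atvars[OF t]] v(4) atin[OF t] apply blast
      using \<open>v y = as ! y\<close> True v(1) n_def y by (auto simp: Q_def) (metis image_eqI)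
    then have "cls ar k A (Qt t, v y) = cls ar k A (Q, v y)" by (rule cls_eq)
    then show ?thesis using True \<open>v y = as ! y\<close> by (simp add: w_def ren_def)
  next
    case False
    then show ?thesis by (simp add: w_def ren_def)
  qed
  have setG2: "set (gatoms G2) = (\<lambda>t. amap (ren t) (ats ! t)) ` {0..<length ats}"
    by (simp add: G2_def)
  have ats_ex: "\<exists>t<length ats. \<alpha> = ats ! t" if "\<alpha> \<in> set (gatoms G)" for \<alpha>
    using that unfolding ats_def by (metis in_set_conv_nth)
  have gvG2: "gvars G2 = (\<Union>t\<in>{0..<length ats}. ren t ` avars (ats ! t))"
    unfolding gvars_def setG2 by (simp add: avars_amap)
  have ren_id: "ren t i = i" if "i < n" for t i using that by (simp add: ren_def)
  have wt2: "well_typed_guard ar G2"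
    unfolding well_typed_guard_def
  proof (intro conjI allI impI)
    show "gatoms G2 \<noteq> []" using wt unfolding well_typed_guard_def G2_def ats_def by simp
  next
    fix R xs assume "RelA R xs \<in> set (gatoms G2)"
    then obtain t where t: "t < length ats" "amap (ren t) (ats ! t) = RelA R xs"
      unfolding setG2 by auto
    then show "length xs = ar R" using wt atin[OF t(1)] unfolding well_typed_guard_def
      by (cases "ats ! t") auto
  next
    show "{0..<gfree G2} \<subseteq> gvars G2"
    proof
      fix i assume "i \<in> {0..<gfree G2}"
      then have i: "i < n" "i \<in> gvars G" using wt unfolding G2_def well_typed_guard_def n_def by auto
      then obtain t where "t < length ats" "i \<in> avars (ats ! t)"
        unfolding gvars_def ats_def by (auto simp: in_set_conv_nth)
      then show "i \<in> gvars G2" unfolding gvG2 using ren_id[OF i(1)]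
        by (metis (no_types, lifting) UN_I atLeastLessThan_iff image_eqI zero_le)
    qed
  qed
  have co2: "cooccur G2" if coG: "cooccur G"
    unfolding cooccur_def
  proof (intro allI impI)
    fix i j assume ij: "i < gfree G2" "j < gfree G2"
    then have "i < n" "j < n" by (auto simp: G2_def)
    then obtain \<alpha> where "\<alpha> \<in> set (gatoms G)" "{i, j} \<subseteq> avars \<alpha>"
      using coG unfolding cooccur_def n_def by blast
    then obtain t where t: "t < length ats" "{i, j} \<subseteq> avars (ats ! t)" using ats_ex by blast
    then have "{i, j} \<subseteq> avars (amap (ren t) (ats ! t))"
    proof -
      have "i = ren t i" "j = ren t j" using ren_id \<open>i < n\<close> \<open>j < n\<close> by auto
      moreover have "i \<in> avars (ats ! t)" "j \<in> avars (ats ! t)" using t(2) by auto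
      ultimately have "i \<in> ren t ` avars (ats ! t)" "j \<in> ren t ` avars (ats ! t)"
        by (auto intro: image_eqI)
      then show ?thesis unfolding avars_amap by simp
    qed
    moreover have "amap (ren t) (ats ! t) \<in> set (gatoms G2)" using t(1) unfolding setG2 by simp
    ultimately show "\<exists>\<alpha>\<in>set (gatoms G2). {i, j} \<subseteq> avars \<alpha>" by blast
  qed
  have gv_eq: "gvars G2 = gvars G" if "gvars G = {0..<n}"
  proof -
    have "ren t ` avars (ats ! t) = avars (ats ! t)" if "t < length ats" for t
    proof -
      have "avars (ats ! t) \<subseteq> {0..<n}" using \<open>gvars G = {0..<n}\<close> that
        unfolding gvars_def ats_def by auto
      then have "\<forall>y\<in>avars (ats ! t). ren t y = y" using ren_id by auto
      then show ?thesis by (metis image_cong image_ident)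
    qed
    then have "gvars G2 = (\<Union>t\<in>{0..<length ats}. avars (ats ! t))" unfolding gvG2 by simp
    also have "\<dots> = gvars G" unfolding gvars_def ats_def
      by (auto simp: in_set_conv_nth) (metis nth_mem, metis atLeastLessThan_iff zero_le)
    finally show ?thesis .
  qed
  have isg2: "is_guard ar k G2"
    using G(1) wt2 co2 gv_eq by (cases k) (auto simp: G2_def n_def ats_def)
  have sat2: "sat_guard B G2 as2"
    unfolding sat_guard_def
  proof (intro conjI exI[of _ w])
    show "length as2 = gfree G2" by (simp add: as2_def G2_def)
    show "\<forall>i<gfree G2. w i = as2 ! i" by (simp add: as2_def G2_def)
    show "\<forall>i\<in>gvars G2. w i \<in> univ B"
    proof
      fix z assume "z \<in> gvars G2"
      then obtain t y where t: "t < length ats" "y \<in> avars (ats ! t)" "z = ren t y"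
        unfolding gvG2 by auto
      have "(Qt t, v y) \<in> fplays ar k A" using Qtplay[OF t(1)] t(2)
        unfolding fplays_def Qt_def by auto
      then have "cls ar k A (Qt t, v y) \<in> univ (Gstruct ar k A)" by (rule cls_univ)
      then show "w z \<in> univ B" using hom key[OF t(1,2)] t(3) unfolding hom_def by auto
    qed
    show "\<forall>\<alpha>\<in>set (gatoms G2). aholds B w \<alpha>"
    proof
      fix \<alpha> assume "\<alpha> \<in> set (gatoms G2)"
      then obtain t where t: "t < length ats" "\<alpha> = amap (ren t) (ats ! t)" unfolding setG2 by auto
      define w' where "w' = (\<lambda>y. h (cls ar k A (Qt t, v y)))"
      have "aholds B (w \<circ> ren t) (ats ! t) = aholds B w' (ats ! t)"
        by (rule aholds_cong) (simp add: key[OF t(1)] w'_def)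
      moreover have "aholds B w' (ats ! t)"
      proof (cases "ats ! t")
        case (RelA R xs)
        have hv: "map v xs \<in> rel A R" using v(4) atin[OF t(1)] RelA by force
        have "map (\<lambda>c. cls ar k A (Qt t, c)) (map v xs) \<in> rel (Gstruct ar k A) R"
          unfolding Gstruct_def using Qtplay[OF t(1)] hv RelA
          by (auto simp: Qt_def intro!: exI[of _ "Qt t"] exI[of _ "map v xs"])
        then have "map h (map (\<lambda>c. cls ar k A (Qt t, c)) (map v xs)) \<in> rel B R"
          using hom unfolding hom_def by blast
        then show ?thesis using RelA by (simp add: w'_def comp_def)
      next
        case (EqA i j)
        then show ?thesis using v(4) atin[OF t(1)] by (force simp: w'_def)
      qed
      ultimately show "aholds B w \<alpha>" using t(2) by (simp add: aholds_amap)
    qed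
  qed
  have sub: "(\<lambda>b. h (cls ar k A (P, b))) ` last P \<subseteq> set as2"
  proof
    fix x assume "x \<in> (\<lambda>b. h (cls ar k A (P, b))) ` last P"
    then obtain b where b: "b \<in> last P" "x = h (cls ar k A (P, b))" by auto
    then obtain i where i: "i < n" "b = as ! i" using G(3) v(1) n_def by (metis in_set_conv_nth subsetD)
    have "((Q, b), (P, b)) \<in> sim ar k A" unfolding Q_def
      using ext_sim[OF P gas b(1)] G(3) b(1) by auto
    then have "cls ar k A (Q, b) = cls ar k A (P, b)" by (rule cls_eq)
    then have "x = w i" using b i by (simp add: w_def)
    then show "x \<in> set as2" using i by (simp add: as2_def)
  qed
  show ?thesis using isg2 sat2 sub unfolding guarded_def by blast
qed


definition Vs :: "('r \<Rightarrow> nat) \<Rightarrow> guard_kind \<Rightarrow> ('a, 'r) struct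
    \<Rightarrow> (('a set list \<times> 'a) set \<Rightarrow> 'b) \<Rightarrow> 'a set list \<Rightarrow> 'b set list" where
  "Vs ar k A h p = map (\<lambda>j. (\<lambda>b. h (cls ar k A (take (Suc j) p, b))) ` (p ! j)) [0..<length p]"

lemma length_Vs [simp]: "length (Vs ar k A h p) = length p"
  by (simp add: Vs_def)

lemma nth_Vs: "j < length p \<Longrightarrow> Vs ar k A h p ! j = (\<lambda>b. h (cls ar k A (take (Suc j) p, b))) ` (p ! j)"
  by (simp add: Vs_def)

lemma take_Vs: "take i (Vs ar k A h p) = Vs ar k A h (take i p)"
proof (rule nth_equalityI)
  show "length (take i (Vs ar k A h p)) = length (Vs ar k A h (take i p))" by simp
  fix j assume "j < length (take i (Vs ar k A h p))"
  then have j: "j < i" "j < length p" by auto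
  have "take i (Vs ar k A h p) ! j = Vs ar k A h p ! j" using j by simp
  also have "\<dots> = (\<lambda>b. h (cls ar k A (take (Suc j) p, b))) ` (p ! j)" using j by (simp add: nth_Vs)
  also have "\<dots> = Vs ar k A h (take i p) ! j"
    using j by (simp add: nth_Vs take_take min_def)
  finally show "take i (Vs ar k A h p) ! j = Vs ar k A h (take i p) ! j" .
qed

lemma last_Vs: "p \<noteq> [] \<Longrightarrow> last (Vs ar k A h p) = (\<lambda>b. h (cls ar k A (p, b))) ` last p"
proof -
  assume "p \<noteq> []"
  then have "Vs ar k A h p \<noteq> []" by (metis length_Vs length_0_conv)
  then have "last (Vs ar k A h p) = Vs ar k A h p ! (length p - 1)"
    by (simp add: last_conv_nth)
  also have "\<dots> = (\<lambda>b. h (cls ar k A (p, b))) ` last p"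
    using \<open>p \<noteq> []\<close> by (simp add: nth_Vs last_conv_nth)
  finally show ?thesis .
qed

lemma coext_alt: "coext ar k A B h x =
   cls ar k B (Vs ar k A h (fst (SOME y. y \<in> x)), h (cls ar k A (SOME y. y \<in> x)))"
  by (simp add: coext_def Vs_def split: prod.split)

lemma plays_take: "p \<in> plays ar k A \<Longrightarrow> 0 < i \<Longrightarrow> take i p \<in> plays ar k A"
  unfolding plays_def by (auto dest: in_set_takeD)

lemma Vs_plays:
  assumes hom: "hom (Gstruct ar k A) B h" and p: "p \<in> plays ar k A"
  shows "Vs ar k A h p \<in> plays ar k B"
proof -
  have "guarded ar k B U" if "U \<in> set (Vs ar k A h p)" for U
  proof -
    obtain j where j: "j < length p" "U = Vs ar k A h p ! j" using \<open>U \<in> set _\<close>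
      by (metis in_set_conv_nth length_Vs)
    have tp: "take (Suc j) p \<in> plays ar k A" using plays_take[OF p] by simp
    have "last (take (Suc j) p) = p ! j" using j(1) by (simp add: take_Suc_conv_app_nth)
    then have "U = (\<lambda>b. h (cls ar k A (take (Suc j) p, b))) ` last (take (Suc j) p)"
      using j by (simp add: nth_Vs)
    then show ?thesis using guarded_img[OF hom tp] by simp
  qed
  moreover have "Vs ar k A h p \<noteq> []" using p unfolding plays_def by (auto simp: Vs_def)
  ultimately show ?thesis unfolding plays_def by auto
qed

lemma fplays_Vs:
  assumes hom: "hom (Gstruct ar k A) B h" and pa: "(p, a) \<in> fplays ar k A"
  shows "(Vs ar k A h p, h (cls ar k A (p, a))) \<in> fplays ar k B"
proof -
  have p: "p \<in> plays ar k A" "a \<in> last p" "p \<noteq> []" using pa unfolding fplays_def plays_def by auto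
  have "last (Vs ar k A h p) = (\<lambda>b. h (cls ar k A (p, b))) ` last p" by (rule last_Vs[OF p(3)])
  then show ?thesis using Vs_plays[OF hom p(1)] p(2) unfolding fplays_def by auto
qed

lemma prefix_take_eq: "prefix xs ys \<Longrightarrow> take (length xs) ys = xs"
  by (auto simp: prefix_def)

lemma sim_take:
  assumes s: "((q, c), (q', c)) \<in> sim ar k A"
    and u1: "prefix (longest_common_prefix q q') u" and u2: "prefix u q"
  shows "c \<in> last u \<and> ((u, c), (q, c)) \<in> sim ar k A"
proof -
  have S: "\<And>u. prefix (longest_common_prefix q q') u \<Longrightarrow> prefix u q \<or> prefix u q' \<Longrightarrow> c \<in> last u"
    and ne: "longest_common_prefix q q' \<noteq> []" and f: "(q, c) \<in> fplays ar k A"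
    using s unfolding sim_def by auto
  have cu: "c \<in> last u" using S u1 u2 by blast
  have une: "u \<noteq> []" using u1 ne by auto
  have "u \<in> plays ar k A" using f une set_mono_prefix[OF u2] unfolding fplays_def plays_def by auto
  then have fu: "(u, c) \<in> fplays ar k A" using cu unfolding fplays_def by auto
  have lc: "longest_common_prefix u q = u" by (rule lcp_prefix_eq[OF u2])
  have "c \<in> last u'" if "prefix u u'" "prefix u' u \<or> prefix u' q" for u'
  proof -
    have "prefix u' q" using that u2 prefix_order.trans by blast
    moreover have "prefix (longest_common_prefix q q') u'" using u1 that(1) prefix_order.trans by blast
    ultimately show ?thesis using S by blast
  qed
  then have "((u, c), (q, c)) \<in> sim ar k A" using fu f lc une unfolding sim_def by auto
  then show ?thesis using cu by blast
qed

lemma wd_side: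
  assumes hom: "hom (Gstruct ar k A) B h" and s: "((q, c), (q', c)) \<in> sim ar k A"
    and u1: "prefix (Vs ar k A h (longest_common_prefix q q')) u"
    and u2: "prefix u (Vs ar k A h q)"
  shows "h (cls ar k A (q, c)) \<in> last u"
proof -
  let ?m = "longest_common_prefix q q'"
  define i where "i = length u"
  have ne: "?m \<noteq> []" using s unfolding sim_def by auto
  have ui: "u = Vs ar k A h (take i q)" using prefix_take_eq[OF u2] take_Vs i_def by metis
  have li: "length ?m \<le> i" using prefix_length_le[OF u1] i_def by simp
  have iq: "i \<le> length q" using prefix_length_le[OF u2] i_def by simp
  have mq: "prefix ?m q" by (rule longest_common_prefix_prefix1)
  have "prefix ?m (take i q)"
    using prefix_length_prefix[OF mq take_is_prefix] li iq by simp
  then have st: "c \<in> last (take i q) \<and> ((take i q, c), (q, c)) \<in> sim ar k A"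
    using sim_take[OF s _ take_is_prefix] by blast
  have tne: "take i q \<noteq> []" using \<open>prefix ?m (take i q)\<close> ne by (metis prefix_Nil)
  have "last u = (\<lambda>b. h (cls ar k A (take i q, b))) ` last (take i q)"
    using ui last_Vs[OF tne] by simp
  moreover have "cls ar k A (take i q, c) = cls ar k A (q, c)" using st cls_eq by blast
  ultimately show ?thesis using st by (metis image_eqI)
qed

lemma wd:
  assumes hom: "hom (Gstruct ar k A) B h" and s: "((q, c), (q', c)) \<in> sim ar k A"
  shows "((Vs ar k A h q, h (cls ar k A (q, c))), (Vs ar k A h q', h (cls ar k A (q, c)))) \<in> sim ar k B"
proof -
  let ?m = "longest_common_prefix q q'"
  have s': "((q', c), (q, c)) \<in> sim ar k A" using sim_sym[OF s] .
  have ceq: "cls ar k A (q', c) = cls ar k A (q, c)" using cls_eq[OF s'] .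
  have ne: "?m \<noteq> []" using s unfolding sim_def by auto
  have f: "(q, c) \<in> fplays ar k A" "(q', c) \<in> fplays ar k A" using s unfolding sim_def by auto
  have t1: "take (length ?m) q = ?m" by (rule prefix_take_eq[OF longest_common_prefix_prefix1])
  have t2: "take (length ?m) q' = ?m" by (rule prefix_take_eq[OF longest_common_prefix_prefix2])
  have p1: "prefix (Vs ar k A h ?m) (Vs ar k A h q)" using t1 take_Vs take_is_prefix by metis
  have p2: "prefix (Vs ar k A h ?m) (Vs ar k A h q')" using t2 take_Vs take_is_prefix by metis
  have pl: "prefix (Vs ar k A h ?m) (longest_common_prefix (Vs ar k A h q) (Vs ar k A h q'))"
    using longest_common_prefix_max_prefix[OF p1 p2] .
  have nel: "longest_common_prefix (Vs ar k A h q) (Vs ar k A h q') \<noteq> []"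
    using pl ne by (auto simp: Vs_def)
  have "h (cls ar k A (q, c)) \<in> last u"
    if "prefix (longest_common_prefix (Vs ar k A h q) (Vs ar k A h q')) u"
       "prefix u (Vs ar k A h q) \<or> prefix u (Vs ar k A h q')" for u
  proof -
    have pu: "prefix (Vs ar k A h ?m) u" using pl that(1) prefix_order.trans by blast
    show ?thesis
    proof (cases "prefix u (Vs ar k A h q)")
      case True
      then show ?thesis using wd_side[OF hom s pu] by blast
    next
      case False
      then have "prefix u (Vs ar k A h q')" using that by blast
      moreover have "prefix (Vs ar k A h (longest_common_prefix q' q)) u" using pu by (simp add: lcp_comm)
      ultimately show ?thesis using wd_side[OF hom s'] ceq by metis
    qed
  qed
  moreover have "(Vs ar k A h q, h (cls ar k A (q, c))) \<in> fplays ar k B"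
    using fplays_Vs[OF hom f(1)] .
  moreover have "(Vs ar k A h q', h (cls ar k A (q, c))) \<in> fplays ar k B"
    using fplays_Vs[OF hom f(2)] ceq by simp
  ultimately show ?thesis using nel unfolding sim_def by auto
qed

lemma coext_rep:
  assumes hom: "hom (Gstruct ar k A) B h" and f: "(q, c) \<in> fplays ar k A"
  shows "coext ar k A B h (cls ar k A (q, c)) = cls ar k B (Vs ar k A h q, h (cls ar k A (q, c)))"
proof -
  obtain q' c' where qc: "(SOME y. y \<in> cls ar k A (q, c)) = (q', c')" by fastforce
  have s: "((q', c'), (q, c)) \<in> sim ar k A" using some_cls[OF f] qc by simp
  then have c': "c' = c" unfolding sim_def by simp
  have ceq: "cls ar k A (q', c) = cls ar k A (q, c)" using cls_eq s c' by blast
  have "coext ar k A B h (cls ar k A (q, c)) = cls ar k B (Vs ar k A h q', h (cls ar k A (q', c)))"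
    unfolding coext_alt qc c' by simp
  also have "\<dots> = cls ar k B (Vs ar k A h q, h (cls ar k A (q', c)))"
    using cls_eq[OF wd[OF hom s[unfolded c']]] .
  finally show ?thesis using ceq by simp
qed


lemma guarded_univ: "guarded ar k A X \<Longrightarrow> X \<subseteq> univ A"
proof
  fix x assume "guarded ar k A X" "x \<in> X"
  then obtain G as where G: "is_guard ar k G" "sat_guard A G as" "X \<subseteq> set as"
    unfolding guarded_def by blast
  then obtain v where v: "length as = gfree G" "\<forall>i<gfree G. v i = as ! i"
      "\<forall>i\<in>gvars G. v i \<in> univ A" unfolding sat_guard_def by blast
  obtain i where i: "i < length as" "x = as ! i" using G(3) \<open>x \<in> X\<close> by (metis in_set_conv_nth subsetD)
  have "i \<in> gvars G" using is_guard_wt[OF G(1)] i v(1) unfolding well_typed_guard_def by auto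
  then show "x \<in> univ A" using v i by auto
qed

lemma hom_counit: "hom (Gstruct ar k A) A counit"
  unfolding hom_def
proof (intro conjI ballI allI)
  fix x assume "x \<in> univ (Gstruct ar k A)"
  then obtain p a where pa: "(p, a) \<in> fplays ar k A" "x = cls ar k A (p, a)" using univ_cls by blast
  then have "last p \<in> set p" "p \<in> plays ar k A" "a \<in> last p" unfolding fplays_def plays_def by auto
  then have "a \<in> univ A" using guarded_univ unfolding plays_def by blast
  then show "counit x \<in> univ A" using pa(2) counit_cls[OF pa(1)] by simp
next
  fix R t assume "t \<in> rel (Gstruct ar k A) R"
  then obtain p as where t: "t = map (\<lambda>a. cls ar k A (p, a)) as" "p \<in> plays ar k A"
     "as \<in> rel A R" "set as \<subseteq> last p" unfolding Gstruct_def by auto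
  have "map counit t = as" unfolding t(1) using t(2,4)
    by (auto simp: counit_cls fplays_def intro!: map_idI)
  then show "map counit t \<in> rel A R" using t(3) by simp
qed

lemma hom_comp: "hom X Y f \<Longrightarrow> hom Y Z g \<Longrightarrow> hom X Z (g \<circ> f)"
proof -
  assume f: "hom X Y f" and g: "hom Y Z g"
  have "map (g \<circ> f) t \<in> rel Z R" if "t \<in> rel X R" for R t
  proof -
    have "map f t \<in> rel Y R" using f that unfolding hom_def by blast
    then have "map g (map f t) \<in> rel Z R" using g unfolding hom_def by blast
    then show ?thesis by simp
  qed
  then show ?thesis using f g unfolding hom_def by auto
qed

lemma hom_coext:
  assumes hom: "hom (Gstruct ar k A) B f"
  shows "hom (Gstruct ar k A) (Gstruct ar k B) (coext ar k A B f)"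
  unfolding hom_def
proof (intro conjI ballI allI)
  fix x assume "x \<in> univ (Gstruct ar k A)"
  then obtain p a where pa: "(p, a) \<in> fplays ar k A" "x = cls ar k A (p, a)" using univ_cls by blast
  show "coext ar k A B f x \<in> univ (Gstruct ar k B)"
    using coext_rep[OF hom pa(1)] cls_univ[OF fplays_Vs[OF hom pa(1)]] pa(2) by simp
next
  fix R t assume "t \<in> rel (Gstruct ar k A) R"
  then obtain p as where t: "t = map (\<lambda>a. cls ar k A (p, a)) as" "p \<in> plays ar k A"
     "as \<in> rel A R" "set as \<subseteq> last p" unfolding Gstruct_def by auto
  have "map f t \<in> rel B R" using hom \<open>t \<in> _\<close> unfolding hom_def by blast
  then have r: "map (\<lambda>a. f (cls ar k A (p, a))) as \<in> rel B R" using t(1) by (simp add: comp_def)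
  have pne: "p \<noteq> []" using t(2) unfolding plays_def by simp
  have eq: "map (coext ar k A B f) t =
      map (\<lambda>b. cls ar k B (Vs ar k A f p, b)) (map (\<lambda>a. f (cls ar k A (p, a))) as)"
  proof -
    have "coext ar k A B f (cls ar k A (p, a)) = cls ar k B (Vs ar k A f p, f (cls ar k A (p, a)))"
      if "a \<in> set as" for a
      using coext_rep[OF hom, of p a] t(2,4) that unfolding fplays_def by auto
    then show ?thesis unfolding t(1) by simp
  qed
  have "set (map (\<lambda>a. f (cls ar k A (p, a))) as) \<subseteq> last (Vs ar k A f p)"
  proof -
    have "last (Vs ar k A f p) = (\<lambda>b. f (cls ar k A (p, b))) ` last p" by (rule last_Vs[OF pne])
    then show ?thesis using t(4) by auto
  qed
  then have "\<exists>p' as'. map (\<lambda>b. cls ar k B (Vs ar k A f p, b)) (map (\<lambda>a. f (cls ar k A (p, a))) as)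
       = map (\<lambda>a. cls ar k B (p', a)) as' \<and> p' \<in> plays ar k B \<and> as' \<in> rel B R \<and> set as' \<subseteq> last p'"
    using Vs_plays[OF hom t(2)] r by blast
  then show "map (coext ar k A B f) t \<in> rel (Gstruct ar k B) R"
    unfolding eq by (simp add: Gstruct_def)
qed

theorem theorem3p5:
  fixes ar :: "'r \<Rightarrow> nat" and k :: guard_kind
    and A :: "('a, 'r) struct" and B :: "('b, 'r) struct" and C :: "('c, 'r) struct"
    and f :: "('a set list \<times> 'a) set \<Rightarrow> 'b"
    and g :: "('b set list \<times> 'b) set \<Rightarrow> 'c"
  assumes "sigma_struct ar A" and "sigma_struct ar B" and "sigma_struct ar C"
    and "hom (Gstruct ar k A) B f"
    and "hom (Gstruct ar k B) C g"
  shows "(\<forall>x\<in>univ (Gstruct ar k A). coext ar k A A counit x = x)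
       \<and> (\<forall>x\<in>univ (Gstruct ar k A). counit (coext ar k A B f x) = f x)
       \<and> (\<forall>x\<in>univ (Gstruct ar k A).
            coext ar k A C (g \<circ> coext ar k A B f) x = coext ar k B C g (coext ar k A B f x))"
proof (intro conjI ballI)
  have hf: "hom (Gstruct ar k A) B f" and hg: "hom (Gstruct ar k B) C g" using assms by auto
  fix x assume "x \<in> univ (Gstruct ar k A)"
  then obtain p a where pa: "(p, a) \<in> fplays ar k A" and x: "x = cls ar k A (p, a)"
    using univ_cls by blast
  have p: "p \<in> plays ar k A" "a \<in> last p" using pa unfolding fplays_def by auto
  show "coext ar k A A counit x = x"
  proof -
    have "Vs ar k A counit p = p"
    proof (rule nth_equalityI)
      show "length (Vs ar k A counit p) = length p" by simp
      fix j assume "j < length (Vs ar k A counit p)"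
      then have j: "j < length p" by simp
      have tp: "take (Suc j) p \<in> plays ar k A" using plays_take[OF p(1)] by simp
      have lt: "last (take (Suc j) p) = p ! j" using j by (simp add: take_Suc_conv_app_nth)
      have "(\<lambda>b. counit (cls ar k A (take (Suc j) p, b))) ` (p ! j) = p ! j"
        using tp lt by (auto simp: counit_cls fplays_def)
      then show "Vs ar k A counit p ! j = p ! j" using j by (simp add: nth_Vs)
    qed
    then show ?thesis using coext_rep[OF hom_counit pa] counit_cls[OF pa] x by simp
  qed
  show "counit (coext ar k A B f x) = f x"
    using coext_rep[OF hf pa] counit_cls[OF fplays_Vs[OF hf pa]] x by simp
  show "coext ar k A C (g \<circ> coext ar k A B f) x = coext ar k B C g (coext ar k A B f x)"
  proof -
    have hgf: "hom (Gstruct ar k A) C (g \<circ> coext ar k A B f)"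
      by (rule hom_comp[OF hom_coext[OF hf] hg])
    have fx: "coext ar k A B f x = cls ar k B (Vs ar k A f p, f x)"
      using coext_rep[OF hf pa] x by simp
    have fV: "(Vs ar k A f p, f x) \<in> fplays ar k B" using fplays_Vs[OF hf pa] x by simp
    have rhs: "coext ar k B C g (coext ar k A B f x) =
        cls ar k C (Vs ar k B g (Vs ar k A f p), g (coext ar k A B f x))"
      using coext_rep[OF hg fV] fx by simp
    have lhs: "coext ar k A C (g \<circ> coext ar k A B f) x =
        cls ar k C (Vs ar k A (g \<circ> coext ar k A B f) p, g (coext ar k A B f x))"
      using coext_rep[OF hgf pa] x by simp
    have "Vs ar k A (g \<circ> coext ar k A B f) p = Vs ar k B g (Vs ar k A f p)"
    proof (rule nth_equalityI)
      show "length (Vs ar k A (g \<circ> coext ar k A B f) p) = length (Vs ar k B g (Vs ar k A f p))" by simp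
      fix j assume "j < length (Vs ar k A (g \<circ> coext ar k A B f) p)"
      then have j: "j < length p" by simp
      have tp: "take (Suc j) p \<in> plays ar k A" using plays_take[OF p(1)] by simp
      have lt: "last (take (Suc j) p) = p ! j" using j by (simp add: take_Suc_conv_app_nth)
      have fb: "(take (Suc j) p, b) \<in> fplays ar k A" if "b \<in> p ! j" for b
        using tp lt that unfolding fplays_def by auto
      have "Vs ar k A (g \<circ> coext ar k A B f) p ! j =
          (\<lambda>b. g (cls ar k B (Vs ar k A f (take (Suc j) p), f (cls ar k A (take (Suc j) p, b))))) ` (p ! j)"
        using j fb by (auto simp: nth_Vs coext_rep[OF hf])
      also have "\<dots> = Vs ar k B g (Vs ar k A f p) ! j"
        using j by (simp add: nth_Vs take_Vs image_image)
      finally show "Vs ar k A (g \<circ> coext ar k A B f) p ! j = Vs ar k B g (Vs ar k A f p) ! j" .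
    qed
    then show ?thesis using lhs rhs by simp
  qed
qed

end
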